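(* There exists a directed set $\mathcal A$, which is not a cardinal number, with $\operatorname{card}(\mathcal A)=\operatorname{add}(\mathcal N)$, such that $\mathcal{AN}_{\mathcal A}$ is strongly $\mathfrak c$-algebrable in $\left(\mathbb R^{\mathbb R}\right)^{\mathcal A}$.
   Context: A directed set is a nonempty set $\mathcal A$ with a reflexive transitive relation $\le$ in which any two elements have an upper bound; $x_A\to x$ if for each neighbourhood $U$ of $x$ there is $A_0$ with $x_A\in U$ for $A\ge A_0$. $\left(\mathbb R^{\mathbb R}\right)^{\mathcal A}$ is the commutative real algebra of nets of functions $\mathbb R\to\mathbb R$ with indexwise addition, multiplication and scalar multiplication. $\mathcal N$ denotes the Lebesgue null sets; $\operatorname{add}(\mathcal N)$ is the least cardinality of a family of null sets whose union is not null. $\mathcal{AN}_{\mathcal A}$: nets of Lebesgue measurable functions $f_A:\mathbb R\to\mathbb R$ that converge pointwise a.e. to a function $f:\mathbb R\to\mathbb R$ which is not Lebesgue measurable. A subset $S$ of a commutative algebra is strongly $\kappa$-algebrable if there is a set $X$ of $\kappa$ algebraically independent elements such that every nonzero element of the (non-unital) algebra generated by $X$ belongs to $S$. *)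

theory Defs
  imports "HOL-Analysis.Analysis" "HOL-Library.Poly_Mapping"
begin

text \<open>Directed sets, carried by a subset A of the reals (any directed set of
cardinality at most continuum is isomorphic to one of these), with a relation le.\<close>
definition directed_set :: "real set \<Rightarrow> (real \<Rightarrow> real \<Rightarrow> bool) \<Rightarrow> bool" where
  "directed_set A le \<longleftrightarrow> A \<noteq> {}
     \<and> (\<forall>a\<in>A. le a a)
     \<and> (\<forall>a\<in>A. \<forall>b\<in>A. \<forall>c\<in>A. le a b \<longrightarrow> le b c \<longrightarrow> le a c)
     \<and> (\<forall>a\<in>A. \<forall>b\<in>A. \<exists>c\<in>A. le a c \<and> le b c)"

definition dir_rel :: "real set \<Rightarrow> (real \<Rightarrow> real \<Rightarrow> bool) \<Rightarrow> real rel" where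
  "dir_rel A le = {(a, b). a \<in> A \<and> b \<in> A \<and> le a b}"

definition net_converges :: "real set \<Rightarrow> (real \<Rightarrow> real \<Rightarrow> bool) \<Rightarrow> (real \<Rightarrow> real) \<Rightarrow> real \<Rightarrow> bool" where
  "net_converges A le y l \<longleftrightarrow>
     (\<forall>U. open U \<and> l \<in> U \<longrightarrow> (\<exists>a0\<in>A. \<forall>a\<in>A. le a0 a \<longrightarrow> y a \<in> U))"

definition nonnull_union_family :: "real set set \<Rightarrow> bool" where
  "nonnull_union_family F \<longleftrightarrow> F \<subseteq> null_sets lebesgue \<and> \<Union>F \<notin> null_sets lebesgue"

definition card_is_addN :: "'a set \<Rightarrow> bool" where
  "card_is_addN A \<longleftrightarrow>
     (\<exists>F. nonnull_union_family F \<and> (card_of A, card_of F) \<in> ordIso) \<and>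
     (\<forall>F. nonnull_union_family F \<longrightarrow> (card_of A, card_of F) \<in> ordLeq)"

text \<open>Nets of functions R -> R indexed by A: the algebra (R^R)^A, represented
by functions vanishing off A, with indexwise operations.\<close>
type_synonym net = "real \<Rightarrow> real \<Rightarrow> real"

definition nets_on :: "real set \<Rightarrow> net set" where
  "nets_on A = {F. \<forall>a. a \<notin> A \<longrightarrow> F a = (\<lambda>x. 0)}"

definition zero_net :: net where "zero_net = (\<lambda>a x. 0)"

definition AN :: "real set \<Rightarrow> (real \<Rightarrow> real \<Rightarrow> bool) \<Rightarrow> net set" where
  "AN A le = {F \<in> nets_on A. (\<forall>a\<in>A. F a \<in> borel_measurable lebesgue) \<and>
      (\<exists>f. f \<notin> borel_measurable lebesgue \<and>
           (AE x in lebesgue. net_converges A le (\<lambda>a. F a x) (f x)))}"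

inductive_set gen_alg :: "net set \<Rightarrow> net set" for X where
  gen: "F \<in> X \<Longrightarrow> F \<in> gen_alg X"
| add: "F \<in> gen_alg X \<Longrightarrow> G \<in> gen_alg X \<Longrightarrow> (\<lambda>a x. F a x + G a x) \<in> gen_alg X"
| mult: "F \<in> gen_alg X \<Longrightarrow> G \<in> gen_alg X \<Longrightarrow> (\<lambda>a x. F a x * G a x) \<in> gen_alg X"
| scale: "F \<in> gen_alg X \<Longrightarrow> (\<lambda>a x. c * F a x) \<in> gen_alg X"

definition poly_eval :: "((net \<Rightarrow>\<^sub>0 nat) \<Rightarrow>\<^sub>0 real) \<Rightarrow> net" where
  "poly_eval P = (\<lambda>a x. \<Sum>m\<in>Poly_Mapping.keys P. Poly_Mapping.lookup P m * (\<Prod>v\<in>Poly_Mapping.keys (m :: net \<Rightarrow>\<^sub>0 nat). (v a x) ^ Poly_Mapping.lookup m v))"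

definition poly_vars :: "((net \<Rightarrow>\<^sub>0 nat) \<Rightarrow>\<^sub>0 real) \<Rightarrow> net set" where
  "poly_vars P = (\<Union>m\<in>Poly_Mapping.keys P. Poly_Mapping.keys (m :: net \<Rightarrow>\<^sub>0 nat))"

text \<open>Algebraic independence (in the non-unital sense): no nonzero polynomial
without constant term vanishes on distinct elements of X.\<close>
definition alg_independent :: "net set \<Rightarrow> bool" where
  "alg_independent X \<longleftrightarrow>
     (\<forall>P. P \<noteq> 0 \<and> Poly_Mapping.lookup P 0 = 0 \<and> poly_vars P \<subseteq> X \<longrightarrow> poly_eval P \<noteq> zero_net)"

definition strongly_algebrable :: "net set \<Rightarrow> net set \<Rightarrow> 'k set \<Rightarrow> bool" where
  "strongly_algebrable Alg S K \<longleftrightarrow>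
     (\<exists>X. X \<subseteq> Alg \<and> (card_of X, card_of K) \<in> ordIso \<and> alg_independent X \<and>
          (\<forall>F\<in>gen_alg X. F \<noteq> zero_net \<longrightarrow> F \<in> S))"

end

theory Submission
  imports Defs "HOL-Algebra.Free_Abelian_Groups" "HOL-Complex_Analysis.Complex_Analysis"
begin

unbundle cardinal_syntax

definition vrep :: "real \<Rightarrow> real" where
  "vrep x = (SOME y. y \<in> {0..1} \<and> y - x \<in> \<rat>)"

lemma vrep: "vrep x \<in> {0..1} \<and> vrep x - x \<in> \<rat>"
proof -
  have a: "of_int (floor x) \<le> x" "x < of_int (floor x) + 1" by (rule of_int_floor_le, rule real_of_int_floor_add_one_gt)
  have "(x - of_int (floor x)) - x = of_int (- floor x)" by simp
  then have b: "(x - of_int (floor x)) - x \<in> \<rat>" by (simp only: Rats_of_int)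
  have "0 \<le> x - of_int (floor x)" "x - of_int (floor x) \<le> 1" using a by linarith+
  then have "(x - of_int (floor x)) \<in> {0..1::real}" by (simp only: atLeastAtMost_iff)
  with b have "(x - of_int (floor x)) \<in> {0..1} \<and> (x - of_int (floor x)) - x \<in> \<rat>" by blast
  then show ?thesis unfolding vrep_def by (rule someI)
qed

lemma vrep_eq: assumes "x - y \<in> \<rat>" shows "vrep x = vrep y"
proof -
  have "(\<lambda>z. z \<in> {0..1} \<and> z - x \<in> \<rat>) = (\<lambda>z. z \<in> {0..1} \<and> z - y \<in> \<rat>)"
  proof (rule ext)
    fix z
    have "z - y = (z - x) + (x - y)" "z - x = (z - y) - (x - y)" by simp_all
    then show "(z \<in> {0..1} \<and> z - x \<in> \<rat>) = (z \<in> {0..1} \<and> z - y \<in> \<rat>)"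
      using assms by (metis Rats_add Rats_diff)
  qed
  then show ?thesis unfolding vrep_def by simp
qed

lemma vrep_idem: "vrep (vrep x) = vrep x"
  using vrep[of x] by (intro vrep_eq) auto

lemma subset_T_null:
  assumes E: "E \<in> sets lebesgue" and sub: "E \<subseteq> {x. x - vrep x = q}"
  shows "E \<in> null_sets lebesgue"
proof -
  define E' where "E' = (+) (-q) ` E"
  have E'W: "\<And>y. y \<in> E' \<Longrightarrow> vrep y = y"
  proof -
    fix y assume "y \<in> E'"
    then obtain x where x: "x \<in> E" "y = -q + x" unfolding E'_def by auto
    then have "y = vrep x" using sub by auto
    then show "vrep y = y" using vrep_idem by simp
  qed
  have E'01: "E' \<subseteq> {0..1}" using E'W vrep by (metis subsetI)
  have E'l: "E' \<in> lmeasurable"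
    using E unfolding E'_def
    by (metis E'01 E'_def compact_Icc compact_imp_bounded bounded_set_imp_lmeasurable bounded_subset lebesgue_sets_translation)
  define c where "c = measure lebesgue E'"
  define D where "D n = (+) (1 / real (Suc n)) ` E'" for n
  have Dl: "D n \<in> lmeasurable" for n unfolding D_def using E'l by (rule measurable_translation)
  have Dm: "measure lebesgue (D n) = c" for n unfolding D_def c_def by (rule measure_translation)
  have D02: "D n \<subseteq> {0..2}" for n
  proof
    fix y assume "y \<in> D n"
    then obtain w where "w \<in> E'" "y = 1 / real (Suc n) + w" unfolding D_def by auto
    moreover have "1 / real (Suc n) \<le> 1" "0 \<le> 1 / real (Suc n)" by auto
    moreover have "0 \<le> w" "w \<le> 1" using E'01 \<open>w \<in> E'\<close> by auto
    ultimately show "y \<in> {0..2}" by (simp only: atLeastAtMost_iff) linarith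
  qed
  have disj: "pairwise (\<lambda>i j. disjnt (D i) (D j)) I" for I
  proof (clarsimp simp: pairwise_def disjnt_def)
    fix i j :: nat assume "i \<noteq> j"
    show "D i \<inter> D j = {}"
    proof (rule ccontr)
      assume "D i \<inter> D j \<noteq> {}"
      then obtain w w' where w: "w \<in> E'" "w' \<in> E'" "1 / real (Suc i) + w = 1 / real (Suc j) + w'"
        unfolding D_def by auto
      then have "w - w' = 1 / real (Suc j) - 1 / real (Suc i)" by simp
      also have "\<dots> \<in> \<rat>" by (intro Rats_diff Rats_divide) (simp_all add: Rats_of_nat)
      finally have "vrep w = vrep w'" by (rule vrep_eq)
      then have "w = w'" using E'W w by metis
      with w have "real (Suc i) = real (Suc j)" by (simp add: field_simps)
      with \<open>i \<noteq> j\<close> show False by simp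
    qed
  qed
  have l02: "{0..2::real} \<in> lmeasurable" by simp
  have bound: "real N * c \<le> measure lebesgue {0..2::real}" for N
  proof -
    have "measure lebesgue (\<Union>n\<in>{..<N}. D n) = (\<Sum>n\<in>{..<N}. measure lebesgue (D n))"
      by (rule measure_UNION') (use Dl disj in auto)
    also have "\<dots> = real N * c" using Dm by simp
    finally have eq: "measure lebesgue (\<Union>n\<in>{..<N}. D n) = real N * c" .
    have "measure lebesgue (\<Union>n\<in>{..<N}. D n) \<le> measure lebesgue {0..2::real}"
      by (rule measure_mono_fmeasurable) (use D02 Dl l02 in \<open>auto intro!: sets.finite_UN\<close>)
    with eq show ?thesis by simp
  qed
  have c0: "c = 0"
  proof (rule ccontr)
    assume "c \<noteq> 0"
    moreover have "c \<ge> 0" unfolding c_def by simp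
    ultimately have "c > 0" by simp
    obtain N :: nat where "measure lebesgue {0..2::real} / c < real N" using reals_Archimedean2 by blast
    with \<open>c > 0\<close> have "measure lebesgue {0..2::real} < real N * c" by (simp add: field_simps)
    with bound[of N] show False by simp
  qed
  have "E' \<in> null_sets lebesgue"
    using E'l c0 unfolding c_def
    by (simp add: fmeasurableD2 emeasure_eq_measure2 null_setsI)
  then have "(+) q ` E' \<in> null_sets lebesgue"
    by (metis negligible_iff_null_sets negligible_translation)
  moreover have "(+) q ` E' = E" unfolding E'_def by (auto simp: image_image)
  ultimately show ?thesis by simp
qed

lemma nonmeasurable_subset:
  fixes U :: "real set" assumes U: "U \<notin> null_sets lebesgue"
  shows "\<exists>V \<subseteq> U. V \<notin> sets lebesgue"
proof (rule ccontr)
  assume "\<not> ?thesis"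
  then have all: "\<And>V. V \<subseteq> U \<Longrightarrow> V \<in> sets lebesgue" by auto
  have "U = (\<Union>q\<in>\<rat>. U \<inter> {x. x - vrep x = q})"
  proof -
    have "x - vrep x \<in> \<rat>" for x using vrep[of x] by (metis Rats_minus_iff minus_diff_eq)
    then show ?thesis by auto
  qed
  also have "\<dots> \<in> null_sets lebesgue"
  proof (rule null_sets_UN')
    show "countable \<rat>" by (rule countable_rat)
    fix q assume "q \<in> (\<rat>::real set)"
    show "U \<inter> {x. x - vrep x = q} \<in> null_sets lebesgue"
      by (rule subset_T_null[where q=q]) (rule all, auto)
  qed
  finally show False using U by simp
qed

lemma exp_indep:
  fixes K :: "real set" and d :: "real \<Rightarrow> real"
  assumes "finite K"
  shows "(\<forall>x. (\<Sum>l\<in>K. d l * exp (l * x)) = 0) \<longrightarrow> (\<forall>l\<in>K. d l = 0)"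
  using assms
proof (induction K rule: finite_linorder_max_induct)
  case empty show ?case by simp
next
  case (insert b A)
  show ?case
  proof (intro impI)
    assume H: "\<forall>x. (\<Sum>l\<in>insert b A. d l * exp (l * x)) = 0"
    have bA: "b \<notin> A" using insert by auto
    have eq: "d b + (\<Sum>l\<in>A. d l * exp ((l - b) * x)) = 0" for x
    proof -
      have e: "exp (-b*x) * exp (l*x) = exp ((l-b)*x)" for l
        by (simp add: exp_add[symmetric] algebra_simps)
      have "0 = exp (-b*x) * (\<Sum>l\<in>insert b A. d l * exp (l * x))" using H by simp
      also have "\<dots> = exp (-b*x) * (d b * exp (b * x)) + (\<Sum>l\<in>A. exp (-b*x) * (d l * exp (l * x)))"
        using bA insert(1) by (simp add: sum_distrib_left distrib_left)
      also have "\<dots> = d b + (\<Sum>l\<in>A. d l * exp ((l - b) * x))"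
      proof -
        have t1: "exp (-b*x) * (d b * exp (b * x)) = d b" by (simp add: exp_minus field_simps)
        have t2: "(\<Sum>l\<in>A. exp (-b*x) * (d l * exp (l * x))) = (\<Sum>l\<in>A. d l * exp ((l - b) * x))"
          by (rule sum.cong) (simp, metis e mult.left_commute)
        show ?thesis using t1 t2 by simp
      qed
      finally show ?thesis by simp
    qed
    have lim: "((\<lambda>x. d b + (\<Sum>l\<in>A. d l * exp ((l - b) * x))) \<longlongrightarrow> d b + (\<Sum>l\<in>A. d l * 0)) at_top"
    proof (intro tendsto_add tendsto_const tendsto_sum tendsto_mult)
      fix l assume "l \<in> A"
      then have "l - b < 0" using insert by auto
      then show "((\<lambda>x. exp ((l - b) * x)) \<longlongrightarrow> 0) at_top" by real_asymp
    qed
    then have "((\<lambda>x::real. 0::real) \<longlongrightarrow> d b) at_top" using eq by simp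
    then have db: "d b = 0" by (simp add: tendsto_const_iff)
    have "\<forall>x. (\<Sum>l\<in>A. d l * exp (l * x)) = 0"
      using H db bA insert(1) by simp
    with insert.IH have "\<forall>l\<in>A. d l = 0" by blast
    with db show "\<forall>l\<in>insert b A. d l = 0" by blast
  qed
qed

definition entire_real :: "(real \<Rightarrow> real) \<Rightarrow> bool" where
  "entire_real p \<longleftrightarrow> (\<exists>g. g holomorphic_on UNIV \<and> (\<forall>x. g (complex_of_real x) = complex_of_real (p x)))"

lemma entire_real_add: "entire_real p \<Longrightarrow> entire_real q \<Longrightarrow> entire_real (\<lambda>x. p x + q x)"
  unfolding entire_real_def
  by (metis (mono_tags, lifting) holomorphic_on_add of_real_add)

lemma entire_real_mult: "entire_real p \<Longrightarrow> entire_real q \<Longrightarrow> entire_real (\<lambda>x. p x * q x)"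
  unfolding entire_real_def
  by (metis (mono_tags, lifting) holomorphic_on_mult of_real_mult)

lemma entire_real_scale: "entire_real p \<Longrightarrow> entire_real (\<lambda>x. c * p x)"
proof -
  assume "entire_real p"
  then obtain g where g: "g holomorphic_on UNIV" "\<forall>x. g (complex_of_real x) = complex_of_real (p x)"
    unfolding entire_real_def by blast
  have "(\<lambda>z. complex_of_real c * g z) holomorphic_on UNIV" using g(1) by (intro holomorphic_intros)
  moreover have "\<forall>x. complex_of_real c * g (complex_of_real x) = complex_of_real (c * p x)" using g(2) by simp
  ultimately show ?thesis unfolding entire_real_def by blast
qed

lemma entire_real_exp: "entire_real (\<lambda>x. exp (b * x))"
proof -
  have "(\<lambda>z. exp (complex_of_real b * z)) holomorphic_on UNIV" by (intro holomorphic_intros)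
  moreover have "\<forall>x. exp (complex_of_real b * complex_of_real x) = complex_of_real (exp (b * x))"
    by (simp flip: exp_of_real)
  ultimately show ?thesis unfolding entire_real_def by blast
qed

lemma entire_real_countable_zeros:
  assumes "entire_real p" "p x0 \<noteq> 0"
  shows "countable {x. p x = 0}"
proof (cases "{x. p x = 0} = {}")
  case True then show ?thesis by simp
next
  case False
  then obtain x1 where x1: "p x1 = 0" by auto
  obtain g where g: "g holomorphic_on UNIV" "\<forall>x. g (complex_of_real x) = complex_of_real (p x)"
    using assms(1) unfolding entire_real_def by blast
  have nc: "\<not> g constant_on UNIV"
  proof
    assume "g constant_on UNIV"
    then have "g (complex_of_real x0) = g (complex_of_real x1)" unfolding constant_on_def by auto
    with g(2) x1 assms(2) show False by simp
  qed
  have "countable {z\<in>UNIV. g z = 0}"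
    by (rule holomorphic_countable_zeros[OF g(1)]) (auto simp: nc)
  moreover have "complex_of_real ` {x. p x = 0} \<subseteq> {z\<in>UNIV. g z = 0}" using g(2) by auto
  ultimately have "countable (complex_of_real ` {x. p x = 0})" by (rule countable_subset[rotated])
  then show ?thesis by (rule countable_image_inj_on) (auto simp: inj_on_def)
qed


lemma hamel:
  "\<exists>B::real set. (\<forall>t u. finite t \<longrightarrow> t \<subseteq> B \<longrightarrow> (\<Sum>v\<in>t. of_rat (u v) * v) = 0 \<longrightarrow> (\<forall>v\<in>t. u v = 0))
      \<and> |B| =o |UNIV::real set|"
proof -
  interpret rq: vector_space "\<lambda>(q::rat) (x::real). of_rat q * x"
    by unfold_locales (simp_all add: algebra_simps of_rat_add of_rat_mult)
  obtain B where B: "rq.independent B" "UNIV \<subseteq> rq.span B"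
    using rq.basis_exists[of UNIV] by blast
  have ind: "\<forall>t u. finite t \<longrightarrow> t \<subseteq> B \<longrightarrow> (\<Sum>v\<in>t. of_rat (u v) * v) = 0 \<longrightarrow> (\<forall>v\<in>t. u v = 0)"
    using B(1) unfolding rq.independent_explicit_finite_subsets by blast
  define f where "f = (\<lambda>(t, r). \<Sum>a\<in>t. of_rat (r a) * (a::real))"
  define S where "S = (SIGMA t:Fpow B. Pi\<^sub>E t (\<lambda>_. UNIV :: rat set))"
  have cov: "UNIV \<subseteq> f ` S"
  proof
    fix x :: real
    have "x \<in> rq.span B" using B(2) by blast
    then obtain t r where tr: "x = (\<Sum>a\<in>t. of_rat (r a) * a)" "finite t" "t \<subseteq> B"
      unfolding rq.span_explicit by blast
    have "x = f (t, restrict r t)" unfolding f_def tr(1) by simp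
    moreover have "(t, restrict r t) \<in> S" unfolding S_def Fpow_def using tr by auto
    ultimately show "x \<in> f ` S" by blast
  qed
  have infB: "infinite B"
  proof
    assume "finite B"
    then have "countable S" unfolding S_def
      by (intro countable_SIGMA countable_PiE) (auto simp: Fpow_def intro: countable_finite finite_subset)
    then have "countable (UNIV :: real set)" using cov by (meson countable_image countable_subset)
    then show False using uncountable_UNIV_real by simp
  qed
  have "|S| \<le>o |B|" unfolding S_def
  proof (rule card_of_Sigma_ordLeq_infinite[OF infB])
    show "|Fpow B| \<le>o |B|" using card_of_Fpow_infinite[OF infB] ordIso_iff_ordLeq by blast
    show "\<forall>t\<in>Fpow B. |Pi\<^sub>E t (\<lambda>_. UNIV :: rat set)| \<le>o |B|"
    proof
      fix t assume "t \<in> Fpow B"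
      then have "countable (Pi\<^sub>E t (\<lambda>_. UNIV :: rat set))"
        by (intro countable_PiE) (auto simp: Fpow_def)
      then have "|Pi\<^sub>E t (\<lambda>_. UNIV :: rat set)| \<le>o |UNIV :: nat set|"
        unfolding countable_def card_of_ordLeq[symmetric] by blast
      moreover have "|UNIV :: nat set| \<le>o |B|" using infB infinite_iff_card_of_nat by blast
      ultimately show "|Pi\<^sub>E t (\<lambda>_. UNIV :: rat set)| \<le>o |B|" by (rule ordLeq_transitive)
    qed
  qed
  moreover have "|UNIV :: real set| \<le>o |S|"
    using cov card_of_mono1 card_of_image ordLeq_transitive by blast
  ultimately have "|UNIV :: real set| \<le>o |B|" by (rule ordLeq_transitive[rotated])
  moreover have "|B| \<le>o |UNIV :: real set|" by (rule card_of_mono1) simp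
  ultimately have "|B| =o |UNIV::real set|" using ordIso_iff_ordLeq by blast
  with ind show ?thesis by blast
qed
lemma countable_null: "countable (A::real set) \<Longrightarrow> A \<in> null_sets lebesgue"
  by (metis countable_imp_null_set_lborel null_sets_completion_subset null_sets_completionI order_refl)

lemma entire_real_zero: "entire_real (\<lambda>x. 0)"
  unfolding entire_real_def by (rule exI[of _ "\<lambda>z. 0"]) simp

lemma entire_real_expsum:
  assumes "finite K" shows "entire_real (\<lambda>x. \<Sum>m\<in>K. c m * exp (l m * x))"
  using assms
proof (induction K rule: finite_induct)
  case empty then show ?case by (simp add: entire_real_zero)
next
  case (insert m K)
  then show ?case
    by (simp add: entire_real_add entire_real_scale entire_real_exp)
qed

locale netsetup =
  fixes A :: "real set" and le :: "real \<Rightarrow> real \<Rightarrow> bool" and N :: "real \<Rightarrow> real set" and V :: "real set"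
    and B :: "real set"
  assumes A_ne: "A \<noteq> {}"
    and le_refl: "\<And>a. a \<in> A \<Longrightarrow> le a a"
    and S_null: "\<And>a. a \<in> A \<Longrightarrow> (\<Union>b\<in>{b\<in>A. le b a}. N b) \<in> null_sets lebesgue"
    and V_cover: "\<And>x. x \<in> V \<Longrightarrow> \<exists>b\<in>A. x \<in> N b"
    and V_nm: "V \<notin> sets lebesgue"
    and B_ind: "\<forall>t u. finite t \<longrightarrow> t \<subseteq> B \<longrightarrow> (\<Sum>v\<in>t. of_rat (u v) * v) = 0 \<longrightarrow> (\<forall>v\<in>t. u v = 0)"
    and B_card: "(card_of B, card_of (UNIV::real set)) \<in> ordIso"
begin

definition S :: "real \<Rightarrow> real set" where "S a = (\<Union>b\<in>{b\<in>A. le b a}. N b)"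

definition Net :: "(real \<Rightarrow> real) \<Rightarrow> net" where
  "Net p = (\<lambda>a x. if a \<in> A \<and> x \<in> S a \<and> x \<in> V then p x else 0)"

definition G :: "real \<Rightarrow> net" where "G b = Net (\<lambda>x. exp (b * x))"

lemma S_null': "a \<in> A \<Longrightarrow> S a \<in> null_sets lebesgue"
  unfolding S_def by (rule S_null)

lemma N_sub_S: "b \<in> A \<Longrightarrow> a \<in> A \<Longrightarrow> le b a \<Longrightarrow> N b \<subseteq> S a"
  unfolding S_def by blast

lemma V_cover': "x \<in> V \<Longrightarrow> \<exists>a\<in>A. x \<in> S a"
proof -
  assume "x \<in> V"
  then obtain b where b: "b \<in> A" "x \<in> N b" using V_cover by blast
  then have "x \<in> S b" using N_sub_S[of b b] le_refl by blast
  with b show ?thesis by blast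
qed

lemma V_uncountable: "uncountable V"
proof
  assume "countable V"
  then have "V \<in> null_sets lebesgue" by (rule countable_null)
  then show False using V_nm by auto
qed

lemma V_avoid: "countable Z \<Longrightarrow> \<exists>x\<in>V. x \<notin> Z"
proof (rule ccontr)
  assume c: "countable Z" and "\<not> (\<exists>x\<in>V. x \<notin> Z)"
  then have "V \<subseteq> Z" by auto
  then have "countable V" using c by (rule countable_subset)
  then show False using V_uncountable by simp
qed

lemma gen_rep: "F \<in> gen_alg (G ` B) \<Longrightarrow> \<exists>p. entire_real p \<and> F = Net p"
proof (induction rule: gen_alg.induct)
  case (gen F)
  then show ?case unfolding G_def using entire_real_exp by blast
next
  case (add F H)
  then obtain p q where "entire_real p" "F = Net p" "entire_real q" "H = Net q" by blast
  then show ?case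
  proof (intro exI conjI)
    show "entire_real (\<lambda>x. p x + q x)" using \<open>entire_real p\<close> \<open>entire_real q\<close> by (rule entire_real_add)
    show "(\<lambda>a x. F a x + H a x) = Net (\<lambda>x. p x + q x)"
      unfolding \<open>F = Net p\<close> \<open>H = Net q\<close> by (simp add: Net_def fun_eq_iff)
  qed
next
  case (mult F H)
  then obtain p q where "entire_real p" "F = Net p" "entire_real q" "H = Net q" by blast
  then show ?case
  proof (intro exI conjI)
    show "entire_real (\<lambda>x. p x * q x)" using \<open>entire_real p\<close> \<open>entire_real q\<close> by (rule entire_real_mult)
    show "(\<lambda>a x. F a x * H a x) = Net (\<lambda>x. p x * q x)"
      unfolding \<open>F = Net p\<close> \<open>H = Net q\<close> by (simp add: Net_def fun_eq_iff)
  qed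
next
  case (scale F c)
  then obtain p where "entire_real p" "F = Net p" by blast
  then show ?case
  proof (intro exI conjI)
    show "entire_real (\<lambda>x. c * p x)" using \<open>entire_real p\<close> by (rule entire_real_scale)
    show "(\<lambda>a x. c * F a x) = Net (\<lambda>x. c * p x)"
      unfolding \<open>F = Net p\<close> by (simp add: Net_def fun_eq_iff)
  qed
qed

lemma Net_AN:
  assumes p: "entire_real p" and nz: "Net p \<noteq> zero_net"
  shows "Net p \<in> AN A le"
proof -
  have nets: "Net p \<in> nets_on A" unfolding nets_on_def Net_def by auto
  have meas: "Net p a \<in> borel_measurable lebesgue" if a: "a \<in> A" for a
  proof -
    have "AE x in lebesgue. (\<lambda>x. 0::real) x = Net p a x"
      by (rule AE_I'[OF S_null'[OF a]]) (auto simp: Net_def)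
    then show ?thesis by (rule borel_measurable_AE[rotated]) simp
  qed
  define f where "f = (\<lambda>x. if x \<in> V then p x else 0)"
  have conv: "net_converges A le (\<lambda>a. Net p a x) (f x)" for x
  proof (cases "x \<in> V")
    case True
    then obtain b where b: "b \<in> A" "x \<in> N b" using V_cover by blast
    show ?thesis unfolding net_converges_def
    proof (intro allI impI)
      fix W assume W: "open W \<and> f x \<in> W"
      have "\<forall>a\<in>A. le b a \<longrightarrow> Net p a x \<in> W"
      proof (intro ballI impI)
        fix a assume "a \<in> A" "le b a"
        then have "x \<in> S a" using N_sub_S b by blast
        then show "Net p a x \<in> W" using W True \<open>a \<in> A\<close> unfolding Net_def f_def by simp
      qed
      then show "\<exists>a0\<in>A. \<forall>a\<in>A. le a0 a \<longrightarrow> Net p a x \<in> W" using b by blast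
    qed
  next
    case False
    obtain a0 where "a0 \<in> A" using A_ne by blast
    then show ?thesis using False unfolding net_converges_def Net_def f_def by auto
  qed
  have nm: "f \<notin> borel_measurable lebesgue"
  proof
    assume fm: "f \<in> borel_measurable lebesgue"
    have "\<exists>a x. Net p a x \<noteq> 0" using nz unfolding zero_net_def by (simp add: fun_eq_iff)
    then obtain a x where "Net p a x \<noteq> 0" by blast
    then have x: "x \<in> V" "p x \<noteq> 0" unfolding Net_def by (auto split: if_splits)
    have cZ: "countable {x. p x = 0}" using entire_real_countable_zeros[OF p x(2)] .
    have "f -` {0} \<inter> space lebesgue \<in> sets lebesgue" using borel_measurable_vimage[OF fm] .
    then have s1: "- (f -` {0}) \<in> sets lebesgue" by (simp add: Compl_in_sets_lebesgue)
    have "- (f -` {0}) = V - {x. p x = 0}" unfolding f_def by auto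
    with s1 have s2: "V - {x. p x = 0} \<in> sets lebesgue" by simp
    have "V \<inter> {x. p x = 0} \<in> null_sets lebesgue"
      using cZ by (meson countable_subset inf_le2 countable_null)
    then have "V \<inter> {x. p x = 0} \<in> sets lebesgue" by auto
    with s2 have "(V - {x. p x = 0}) \<union> (V \<inter> {x. p x = 0}) \<in> sets lebesgue" by auto
    moreover have "(V - {x. p x = 0}) \<union> (V \<inter> {x. p x = 0}) = V" by auto
    ultimately show False using V_nm by simp
  qed
  have ae: "AE x in lebesgue. net_converges A le (\<lambda>a. Net p a x) (f x)" using conv by simp
  show ?thesis unfolding AN_def mem_Collect_eq
    by (intro conjI ballI exI[of _ f] nets meas nm ae)
qed

lemma gen_AN: "F \<in> gen_alg (G ` B) \<Longrightarrow> F \<noteq> zero_net \<Longrightarrow> F \<in> AN A le"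
  using gen_rep Net_AN by blast


definition beta :: "net \<Rightarrow> real" where "beta = inv_into B G"

definition lam :: "(net \<Rightarrow>\<^sub>0 nat) \<Rightarrow> real" where
  "lam m = (\<Sum>v\<in>Poly_Mapping.keys m. real (Poly_Mapping.lookup m v) * beta v)"

lemma G_apply: "a \<in> A \<Longrightarrow> x \<in> S a \<Longrightarrow> x \<in> V \<Longrightarrow> G b a x = exp (b * x)"
  unfolding G_def Net_def by simp

lemma G_inj: "inj_on G B"
proof (rule inj_onI)
  fix b b' assume bb: "b \<in> B" "b' \<in> B" "G b = G b'"
  obtain x where x: "x \<in> V" "x \<notin> {0}" using V_avoid[of "{0}"] by auto
  obtain a where a: "a \<in> A" "x \<in> S a" using V_cover'[OF x(1)] by blast
  have e1: "G b a x = exp (b * x)" by (rule G_apply[OF a x(1)])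
  have e2: "G b' a x = exp (b' * x)" by (rule G_apply[OF a x(1)])
  have "exp (b * x) = exp (b' * x)" using e1 e2 bb(3) by (simp only:)
  then have "b * x = b' * x" by simp
  with x(2) show "b = b'" by simp
qed

lemma beta_G: "v \<in> G ` B \<Longrightarrow> G (beta v) = v"
  unfolding beta_def by (rule f_inv_into_f)

lemma beta_in: "v \<in> G ` B \<Longrightarrow> beta v \<in> B"
  unfolding beta_def by (rule inv_into_into)

lemma keys_sub_vars: "m \<in> Poly_Mapping.keys P \<Longrightarrow> Poly_Mapping.keys m \<subseteq> poly_vars P"
  unfolding poly_vars_def by blast

lemma finite_vars: "finite (poly_vars P)"
  unfolding poly_vars_def by simp

lemma poly_eval_eq:
  assumes vars: "poly_vars P \<subseteq> G ` B" and a: "a \<in> A" "x \<in> S a" "x \<in> V"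
  shows "poly_eval P a x = (\<Sum>m\<in>Poly_Mapping.keys P. Poly_Mapping.lookup P m * exp (lam m * x))"
  unfolding poly_eval_def
proof (rule sum.cong[OF refl])
  fix m assume m: "m \<in> Poly_Mapping.keys P"
  have "(\<Prod>v\<in>Poly_Mapping.keys m. v a x ^ Poly_Mapping.lookup m v)
      = (\<Prod>v\<in>Poly_Mapping.keys m. exp (real (Poly_Mapping.lookup m v) * beta v * x))"
  proof (rule prod.cong[OF refl])
    fix v assume "v \<in> Poly_Mapping.keys m"
    then have v: "v \<in> G ` B" using keys_sub_vars[OF m] vars by blast
    have "v a x = exp (beta v * x)" using G_apply[OF a, of "beta v"] beta_G[OF v] by simp
    then show "v a x ^ Poly_Mapping.lookup m v = exp (real (Poly_Mapping.lookup m v) * beta v * x)"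
      by (simp add: exp_of_nat_mult[symmetric] mult.assoc)
  qed
  also have "\<dots> = exp (\<Sum>v\<in>Poly_Mapping.keys m. real (Poly_Mapping.lookup m v) * beta v * x)"
    by (simp add: exp_sum)
  also have "\<dots> = exp (lam m * x)" unfolding lam_def by (simp add: sum_distrib_right)
  finally show "Poly_Mapping.lookup P m * (\<Prod>v\<in>Poly_Mapping.keys m. v a x ^ Poly_Mapping.lookup m v)
      = Poly_Mapping.lookup P m * exp (lam m * x)" by simp
qed

lemma lam_W:
  assumes "Poly_Mapping.keys m \<subseteq> W" "finite W"
  shows "lam m = (\<Sum>v\<in>W. real (Poly_Mapping.lookup m v) * beta v)"
  unfolding lam_def
  by (rule sum.mono_neutral_left) (use assms in \<open>auto simp: in_keys_iff\<close>)

lemma lam_inj: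
  assumes vars: "poly_vars P \<subseteq> G ` B"
  shows "inj_on lam (Poly_Mapping.keys P)"
proof (rule inj_onI)
  fix m m' assume m: "m \<in> Poly_Mapping.keys P" and m': "m' \<in> Poly_Mapping.keys P" and eq: "lam m = lam m'"
  define W where "W = poly_vars P"
  have fW: "finite W" unfolding W_def by (rule finite_vars)
  have "(\<Sum>v\<in>W. real (Poly_Mapping.lookup m v) * beta v) = (\<Sum>v\<in>W. real (Poly_Mapping.lookup m' v) * beta v)"
    using eq lam_W[OF keys_sub_vars[OF m] finite_vars] lam_W[OF keys_sub_vars[OF m'] finite_vars]
    unfolding W_def by simp
  then have z: "(\<Sum>v\<in>W. (real (Poly_Mapping.lookup m v) - real (Poly_Mapping.lookup m' v)) * beta v) = 0"
    by (simp add: left_diff_distrib sum_subtractf)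
  define u where "u b = (of_int (int (Poly_Mapping.lookup m (G b)) - int (Poly_Mapping.lookup m' (G b))) :: rat)" for b
  have WB: "W \<subseteq> G ` B" unfolding W_def using vars .
  have injb: "inj_on beta W" unfolding beta_def using WB by (rule inj_on_inv_into)
  have tB: "beta ` W \<subseteq> B" using beta_in WB by blast
  have "(\<Sum>b\<in>beta ` W. of_rat (u b) * b) = (\<Sum>v\<in>W. of_rat (u (beta v)) * beta v)"
    by (rule sum.reindex[OF injb, unfolded comp_def])
  also have "\<dots> = (\<Sum>v\<in>W. (real (Poly_Mapping.lookup m v) - real (Poly_Mapping.lookup m' v)) * beta v)"
  proof (rule sum.cong[OF refl])
    fix v assume "v \<in> W"
    then have Gb: "G (beta v) = v" using beta_G WB by blast
    have "of_rat (u (beta v)) = real (Poly_Mapping.lookup m v) - real (Poly_Mapping.lookup m' v)"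
      unfolding u_def Gb by (simp only: of_rat_of_int_eq of_int_diff of_int_of_nat_eq of_rat_diff of_rat_of_nat_eq)
    then show "of_rat (u (beta v)) * beta v = (real (Poly_Mapping.lookup m v) - real (Poly_Mapping.lookup m' v)) * beta v"
      by simp
  qed
  also have "\<dots> = 0" by (rule z)
  finally have s0: "(\<Sum>b\<in>beta ` W. of_rat (u b) * b) = 0" .
  have "\<forall>b\<in>beta ` W. u b = 0"
  proof
    fix b assume "b \<in> beta ` W"
    then show "u b = 0" by (rule B_ind[rule_format, OF finite_imageI[OF fW] tB s0])
  qed
  then have same: "Poly_Mapping.lookup m v = Poly_Mapping.lookup m' v" if "v \<in> W" for v
  proof -
    have "u (beta v) = 0" using that \<open>\<forall>b\<in>beta ` W. u b = 0\<close> by blast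
    moreover have "G (beta v) = v" using beta_G WB that by blast
    ultimately show ?thesis unfolding u_def by simp
  qed
  show "m = m'"
  proof (rule poly_mapping_eqI)
    fix v
    show "Poly_Mapping.lookup m v = Poly_Mapping.lookup m' v"
    proof (cases "v \<in> W")
      case True then show ?thesis by (rule same)
    next
      case False
      then have "v \<notin> Poly_Mapping.keys m" "v \<notin> Poly_Mapping.keys m'"
        using keys_sub_vars[OF m] keys_sub_vars[OF m'] unfolding W_def by auto
      then show ?thesis by (simp add: in_keys_iff)
    qed
  qed
qed

lemma alg_indep: "alg_independent (G ` B)"
  unfolding alg_independent_def
proof (intro allI impI)
  fix P :: "(net \<Rightarrow>\<^sub>0 nat) \<Rightarrow>\<^sub>0 real"
  assume H: "P \<noteq> 0 \<and> Poly_Mapping.lookup P 0 = 0 \<and> poly_vars P \<subseteq> G ` B"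
  then have vars: "poly_vars P \<subseteq> G ` B" and P0: "P \<noteq> 0" by auto
  define Q where "Q x = (\<Sum>m\<in>Poly_Mapping.keys P. Poly_Mapping.lookup P m * exp (lam m * x))" for x
  define K where "K = lam ` Poly_Mapping.keys P"
  define d where "d l = Poly_Mapping.lookup P (inv_into (Poly_Mapping.keys P) lam l)" for l
  have inj: "inj_on lam (Poly_Mapping.keys P)" using lam_inj[OF vars] .
  have QK: "Q x = (\<Sum>l\<in>K. d l * exp (l * x))" for x
  proof -
    have "(\<Sum>l\<in>K. d l * exp (l * x)) = (\<Sum>m\<in>Poly_Mapping.keys P. d (lam m) * exp (lam m * x))"
      unfolding K_def by (rule sum.reindex[OF inj, unfolded comp_def])
    also have "\<dots> = Q x" unfolding Q_def d_def
      by (rule sum.cong[OF refl]) (simp add: inv_into_f_f[OF inj])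
    finally show ?thesis by simp
  qed
  obtain m0 where m0: "m0 \<in> Poly_Mapping.keys P" using P0 by (metis keys_eq_empty ex_in_conv)
  have "\<exists>x0. Q x0 \<noteq> 0"
  proof (rule ccontr)
    assume "\<not> (\<exists>x0. Q x0 \<noteq> 0)"
    then have "\<forall>x. (\<Sum>l\<in>K. d l * exp (l * x)) = 0" using QK by simp
    moreover have "finite K" unfolding K_def by simp
    ultimately have "\<forall>l\<in>K. d l = 0" using exp_indep by blast
    then have "d (lam m0) = 0" unfolding K_def using m0 by blast
    then have "Poly_Mapping.lookup P m0 = 0" unfolding d_def by (simp add: inv_into_f_f[OF inj m0])
    then show False using m0 by (simp add: in_keys_iff)
  qed
  then obtain x0 where x0: "Q x0 \<noteq> 0" by blast
  have "entire_real Q" unfolding Q_def by (rule entire_real_expsum) simp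
  then have "countable {x. Q x = 0}" using x0 by (rule entire_real_countable_zeros)
  then obtain x where x: "x \<in> V" "Q x \<noteq> 0" using V_avoid by blast
  obtain a where a: "a \<in> A" "x \<in> S a" using V_cover'[OF x(1)] by blast
  have "poly_eval P a x = Q x" unfolding Q_def by (rule poly_eval_eq[OF vars a x(1)])
  with x(2) have "poly_eval P a x \<noteq> 0" by simp
  then show "poly_eval P \<noteq> zero_net" unfolding zero_net_def by auto
qed

lemma main_alg: "strongly_algebrable (nets_on A) (AN A le) (UNIV :: real set)"
  unfolding strongly_algebrable_def
proof (intro exI conjI)
  show "G ` B \<subseteq> nets_on A" unfolding G_def nets_on_def Net_def by auto
  have "bij_betw G B (G ` B)" using G_inj by (simp add: bij_betw_def)
  then have "(card_of B, card_of (G ` B)) \<in> ordIso" using card_of_ordIso[THEN iffD1] by (intro card_of_ordIso[THEN iffD1] exI)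
  then have "(card_of (G ` B), card_of B) \<in> ordIso" by (rule ordIso_symmetric)
  then show "(card_of (G ` B), card_of (UNIV :: real set)) \<in> ordIso"
    using B_card by (rule ordIso_transitive)
  show "alg_independent (G ` B)" by (rule alg_indep)
  show "\<forall>F\<in>gen_alg (G ` B). F \<noteq> zero_net \<longrightarrow> F \<in> AN A le" using gen_AN by blast
qed
end

lemma UNIV_nonnull: "UNIV \<notin> null_sets (lebesgue :: real measure)"
  using non_negligible_UNIV negligible_iff_null_sets by blast

lemma wo_refl: "Well_order r \<Longrightarrow> x \<in> Field r \<Longrightarrow> (x, x) \<in> r"
  by (rule refl_onD[OF wo_rel.REFL]) (simp_all add: wo_rel_def)
lemma wo_trans: "Well_order r \<Longrightarrow> (x, y) \<in> r \<Longrightarrow> (y, z) \<in> r \<Longrightarrow> (x, z) \<in> r"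
  by (rule transD[OF wo_rel.TRANS]) (simp_all add: wo_rel_def)
lemma wo_total: "Well_order r \<Longrightarrow> x \<in> Field r \<Longrightarrow> y \<in> Field r \<Longrightarrow> (x, y) \<in> r \<or> (y, x) \<in> r"
  using wo_rel.TOTALS[of r] by (simp add: wo_rel_def)

lemma Fs_nonnull: "nonnull_union_family ((\<lambda>x. {x}) ` (UNIV :: real set))"
proof -
  have "(\<lambda>x. {x}) ` (UNIV :: real set) \<subseteq> null_sets lebesgue"
  proof
    fix X assume "X \<in> (\<lambda>x. {x}) ` (UNIV :: real set)"
    then obtain x where "X = {x}" by blast
    then show "X \<in> null_sets lebesgue" by (simp add: countable_null)
  qed
  moreover have "\<Union> ((\<lambda>x. {x}) ` (UNIV :: real set)) = UNIV" by blast
  ultimately show ?thesis unfolding nonnull_union_family_def using UNIV_nonnull by simp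
qed

lemma min_family:
  "\<exists>F0. nonnull_union_family F0 \<and> (\<forall>F. nonnull_union_family F \<longrightarrow> |F0| \<le>o |F| )"
proof -
  define R where "R = card_of ` {F. nonnull_union_family F}"
  have "R \<noteq> {}" unfolding R_def using Fs_nonnull by blast
  moreover have "\<forall>r\<in>R. Well_order r" unfolding R_def using card_of_Well_order by blast
  ultimately obtain r where r: "r \<in> R" "\<forall>r'\<in>R. r \<le>o r'" using exists_minim_Well_order by blast
  then obtain F0 where F0: "nonnull_union_family F0" "r = |F0|" unfolding R_def by blast
  have "\<forall>F. nonnull_union_family F \<longrightarrow> |F0| \<le>o |F|"
  proof (intro allI impI)
    fix F assume "nonnull_union_family F"
    then have "|F| \<in> R" unfolding R_def by blast
    then show "|F0| \<le>o |F|" using r(2) F0(2) by blast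
  qed
  with F0(1) show ?thesis by blast
qed


lemma construction:
  "\<exists>(A::real set) le N V. directed_set A le \<and> \<not> card_order_on A (dir_rel A le) \<and> card_is_addN A
     \<and> A \<noteq> {} \<and> (\<forall>a\<in>A. le a a) \<and> (\<forall>a\<in>A. (\<Union>b\<in>{b\<in>A. le b a}. N b) \<in> null_sets lebesgue)
     \<and> (\<forall>x\<in>V. \<exists>b\<in>A. x \<in> N b) \<and> (V::real set) \<notin> sets lebesgue"
proof -
  obtain F0 where nn: "nonnull_union_family F0" and minF: "\<forall>F. nonnull_union_family F \<longrightarrow> |F0| \<le>o |F|"
    using min_family by blast
  have F0null: "F0 \<subseteq> null_sets lebesgue" and U: "\<Union>F0 \<notin> null_sets lebesgue"
    using nn unfolding nonnull_union_family_def by auto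
  have "|F0| \<le>o |(\<lambda>x. {x}) ` (UNIV :: real set)|" using minF Fs_nonnull by blast
  moreover have "|(\<lambda>x. {x}) ` (UNIV :: real set)| \<le>o |UNIV :: real set|" by (rule card_of_image)
  ultimately have "|F0| \<le>o |UNIV :: real set|" by (rule ordLeq_transitive)
  then obtain e :: "real set \<Rightarrow> real" where e: "inj_on e F0"
    using card_of_ordLeq[of F0 "UNIV :: real set"] by blast
  define A where "A = e ` F0"
  have bij: "bij_betw e F0 A" unfolding A_def using e by (simp add: bij_betw_def)
  have isoF0A: "|F0| =o |A|" using card_of_ordIso[of F0 A] bij by blast
  then have isoAF0: "|A| =o |F0|" by (rule ordIso_symmetric)
  have addN: "card_is_addN A"
    unfolding card_is_addN_def
  proof (intro conjI allI impI)
    show "\<exists>F. nonnull_union_family F \<and> |A| =o |F|" using nn isoAF0 by blast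
    fix F assume "nonnull_union_family F"
    then have "|F0| \<le>o |F|" using minF by blast
    with isoAF0 show "|A| \<le>o |F|" by (rule ordIso_ordLeq_trans)
  qed
  have infF0: "infinite F0"
  proof
    assume "finite F0"
    then have "countable F0" by (rule countable_finite)
    then have "\<Union>(id ` F0) \<in> null_sets lebesgue"
      by (rule null_sets_UN') (use F0null in auto)
    then show False using U by simp
  qed
  have infA: "infinite A" using infF0 bij bij_betw_finite by blast
  define N where "N b = inv_into F0 e b" for b
  have N_in: "b \<in> A \<Longrightarrow> N b \<in> F0" for b unfolding N_def A_def by (rule inv_into_into)
  have N_null: "b \<in> A \<Longrightarrow> N b \<in> null_sets lebesgue" for b using N_in F0null by blast
  have cover: "x \<in> \<Union>F0 \<Longrightarrow> \<exists>b\<in>A. x \<in> N b" for x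
  proof -
    assume "x \<in> \<Union>F0"
    then obtain X where X: "X \<in> F0" "x \<in> X" by blast
    have "N (e X) = X" unfolding N_def using e X(1) by (rule inv_into_f_f)
    moreover have "e X \<in> A" unfolding A_def using X(1) by blast
    ultimately show ?thesis using X(2) by metis
  qed
  obtain p where p: "p \<in> A" using infA by (metis finite.emptyI ex_in_conv)
  obtain q where q: "q \<in> A" "q \<noteq> p"
  proof -
    have "A - {p} \<noteq> {}" using infA by (metis finite.emptyI finite_insert insert_Diff_single insert_absorb2 Diff_empty)
    then show ?thesis using that by blast
  qed
  define g where "g b = (if b = q then p else b)" for b
  have gA: "b \<in> A \<Longrightarrow> g b \<in> A" for b unfolding g_def using p by simp
  define r where "r = |A|"
  have wo: "Well_order r" unfolding r_def by (rule card_of_Well_order)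
  have Fr: "Field r = A" unfolding r_def by (rule Field_card_of)
  have co: "Card_order r" unfolding r_def by (rule card_of_Card_order)
  define le where "le a b = ((g a, g b) \<in> r)" for a b
  have le_refl: "\<forall>a\<in>A. le a a" unfolding le_def using wo_refl[OF wo] gA Fr by simp
  have dir: "directed_set A le"
    unfolding directed_set_def
  proof (intro conjI ballI impI)
    show "A \<noteq> {}" using p by blast
    fix a assume a: "a \<in> A"
    show "le a a" using le_refl a by blast
    fix b assume b: "b \<in> A"
    show "\<exists>c\<in>A. le a c \<and> le b c"
    proof (cases "(g a, g b) \<in> r")
      case True then show ?thesis using b le_refl unfolding le_def by blast
    next
      case False
      then have "(g b, g a) \<in> r" using wo_total[OF wo] gA a b Fr by blast
      then show ?thesis using a le_refl unfolding le_def by blast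
    qed
  next
    fix a b c assume "a \<in> A" "b \<in> A" "c \<in> A" "le a b" "le b c"
    then show "le a c" unfolding le_def using wo_trans[OF wo] by blast
  qed
  have ncard: "\<not> card_order_on A (dir_rel A le)"
  proof
    assume "card_order_on A (dir_rel A le)"
    then have "antisym (dir_rel A le)"
      unfolding card_order_on_def well_order_on_def linear_order_on_def partial_order_on_def by blast
    moreover have "(p, q) \<in> dir_rel A le" "(q, p) \<in> dir_rel A le"
      unfolding dir_rel_def le_def g_def using p q wo_refl[OF wo] Fr by auto
    ultimately have "p = q" by (rule antisymD)
    with q show False by simp
  qed
  have Snull: "\<forall>a\<in>A. (\<Union>b\<in>{b\<in>A. le b a}. N b) \<in> null_sets lebesgue"
  proof
    fix a assume a: "a \<in> A"
    define L where "L = {b\<in>A. le b a}"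
    have Lsub: "L \<subseteq> {q, g a} \<union> underS r (g a)"
    proof
      fix b assume "b \<in> L"
      then have b: "b \<in> A" "(g b, g a) \<in> r" unfolding L_def le_def by auto
      show "b \<in> {q, g a} \<union> underS r (g a)"
      proof (cases "b = q \<or> b = g a")
        case True then show ?thesis by blast
      next
        case False
        then have "g b = b" unfolding g_def by simp
        with b False show ?thesis unfolding underS_def by auto
      qed
    qed
    have l1: "|underS r (g a)| <o |A|" using card_of_underS[OF co] gA[OF a] Fr unfolding r_def by simp
    have l2: "|{q, g a}| <o |A|"
      by (rule finite_ordLess_infinite[OF card_of_Well_order card_of_Well_order, unfolded Field_card_of])
         (simp_all add: infA)
    have "|{q, g a} \<union> underS r (g a)| <o |A|" by (rule card_of_Un_ordLess_infinite[OF infA l2 l1])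
    moreover have "|L| \<le>o |{q, g a} \<union> underS r (g a)|" using Lsub by (rule card_of_mono1)
    ultimately have "|L| <o |A|" using ordLeq_ordLess_trans by blast
    moreover have "|N ` L| \<le>o |L|" by (rule card_of_image)
    ultimately have small: "|N ` L| <o |A|" using ordLeq_ordLess_trans by blast
    show "(\<Union>b\<in>{b\<in>A. le b a}. N b) \<in> null_sets lebesgue"
    proof (rule ccontr)
      assume "(\<Union>b\<in>{b\<in>A. le b a}. N b) \<notin> null_sets lebesgue"
      moreover have "N ` L \<subseteq> null_sets lebesgue" using N_null unfolding L_def by blast
      ultimately have "nonnull_union_family (N ` L)" unfolding nonnull_union_family_def L_def by simp
      then have "|A| \<le>o |N ` L|" using addN unfolding card_is_addN_def by blast
      with small show False using not_ordLess_ordLeq by blast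
    qed
  qed
  obtain V where V: "V \<subseteq> \<Union>F0" "V \<notin> sets lebesgue" using nonmeasurable_subset[OF U] by blast
  have Vcov: "\<forall>x\<in>V. \<exists>b\<in>A. x \<in> N b" using V(1) cover by blast
  show ?thesis
    by (rule exI[of _ A], rule exI[of _ le], rule exI[of _ N], rule exI[of _ V])
       (intro conjI dir ncard addN le_refl Snull Vcov V(2), use p in blast)
qed


theorem mainTheorem5:
  shows "\<exists>(A::real set) le. directed_set A le
           \<and> \<not> card_order_on A (dir_rel A le)
           \<and> card_is_addN A
           \<and> strongly_algebrable (nets_on A) (AN A le) (UNIV :: real set)"
proof -
  obtain A le N V where H: "directed_set A le" "\<not> card_order_on A (dir_rel A le)" "card_is_addN A"
     "A \<noteq> {}" "\<forall>a\<in>A. le a a" "\<forall>a\<in>A. (\<Union>b\<in>{b\<in>A. le b a}. N b) \<in> null_sets lebesgue"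
     "\<forall>x\<in>V. \<exists>b\<in>A. x \<in> N b" "(V::real set) \<notin> sets lebesgue"
    using construction by blast
  obtain B :: "real set" where B: "\<forall>t u. finite t \<longrightarrow> t \<subseteq> B \<longrightarrow> (\<Sum>v\<in>t. of_rat (u v) * v) = 0 \<longrightarrow> (\<forall>v\<in>t. u v = 0)"
      "|B| =o |UNIV::real set|"
    using hamel by blast
  interpret ns: netsetup A le N V B
  proof
    show "A \<noteq> {}" by (rule H(4))
    show "\<And>a. a \<in> A \<Longrightarrow> le a a" using H(5) by blast
    show "\<And>a. a \<in> A \<Longrightarrow> (\<Union>b\<in>{b\<in>A. le b a}. N b) \<in> null_sets lebesgue" using H(6) by blast
    show "\<And>x. x \<in> V \<Longrightarrow> \<exists>b\<in>A. x \<in> N b" using H(7) by blast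
    show "V \<notin> sets lebesgue" by (rule H(8))
    show "\<forall>t u. finite t \<longrightarrow> t \<subseteq> B \<longrightarrow> (\<Sum>v\<in>t. of_rat (u v) * v) = 0 \<longrightarrow> (\<forall>v\<in>t. u v = 0)" by (rule B(1))
    show "|B| =o |UNIV::real set|" by (rule B(2))
  qed
  show ?thesis
    by (intro exI[of _ A] exI[of _ le] conjI H(1) H(2) H(3) ns.main_alg)
qed

end
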